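(* Let $\{(\mathbf{x}_i,y_i)\}_{i=1}^n\subset\mathbb{R}^d\times\mathbb{R}$ with $\|\mathbf{x}_i\|=1$ and $|y_i|=O(1)$, and suppose $\lambda_0:=\lambda_{\min}(\mathbf{H}^\infty)>0$, where $\mathbf{H}^\infty_{ij}=\mathbf{x}_i^\top\mathbf{x}_j\frac{\pi-\arccos(\mathbf{x}_i^\top\mathbf{x}_j)}{2\pi}$. Let $\mathbf{W}=(\mathbf{w}_1,\dots,\mathbf{w}_m)$ with $\mathbf{w}_r\in\mathbb{R}^d$, $a_r\in\{-1,+1\}$, $u_i=\frac{1}{\sqrt m}\sum_{r=1}^m a_r\sigma(\mathbf{w}_r^\top\mathbf{x}_i)$ with $\sigma(z)=\max(z,0)$, $\mathbf{u}=(u_1,\dots,u_n)^\top$, $\mathbf{y}=(y_1,\dots,y_n)^\top$, $L(\mathbf{W})=\frac12\|\mathbf{u}-\mathbf{y}\|^2$, and let $\mathbf{H}\in\mathbb{R}^{n\times n}$ be given by $\mathbf{H}_{ij}=\frac1m\sum_{r=1}^m\mathbf{x}_i^\top\mathbf{x}_j\mathbb{I}\{\mathbf{w}_r^\top\mathbf{x}_i\ge0,\mathbf{w}_r^\top\mathbf{x}_j\ge0\}$. If $\lambda_{\min}(\mathbf{H})\ge\lambda_0/2$, then $$\frac{\sqrt{\lambda_0}}{\sqrt{2m}}\|\mathbf{y}-\mathbf{u}\|\le\max_{r\in[m]}\left\|\frac{\partial L(\mathbf{W})}{\partial\mathbf{w}_r}\right\|\le\frac{\sqrt n}{\sqrt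 m}\|\mathbf{y}-\mathbf{u}\|.$$
   Context: The gradient uses the convention $\frac{\partial L(\mathbf{W})}{\partial\mathbf{w}_r}=\frac{1}{\sqrt m}\sum_{i=1}^n(u_i-y_i)a_r\mathbf{x}_i\mathbb{I}\{\mathbf{w}_r^\top\mathbf{x}_i\ge0\}$. $\|\cdot\|$ is the Euclidean norm and $\lambda_{\min}$ the smallest eigenvalue. *)

theory Defs
  imports "HOL-Analysis.Analysis"
begin

definition lambda_min :: "real^'n^'n \<Rightarrow> real" where
  "lambda_min A = Min {c. \<exists>v. v \<noteq> 0 \<and> A *v v = c *s v}"

definition relu :: "real \<Rightarrow> real" where
  "relu z = max z 0"

definition net_out :: "('n \<Rightarrow> real^'d) \<Rightarrow> ('m::finite \<Rightarrow> real^'d) \<Rightarrow> ('m \<Rightarrow> real) \<Rightarrow> real^'n" where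
  "net_out x W a = (\<chi> i. (1 / sqrt (real CARD('m))) * (\<Sum>r\<in>UNIV. a r * relu (W r \<bullet> x i)))"

definition loss :: "('n::finite \<Rightarrow> real^'d) \<Rightarrow> real^'n \<Rightarrow> ('m::finite \<Rightarrow> real^'d) \<Rightarrow> ('m \<Rightarrow> real) \<Rightarrow> real" where
  "loss x y W a = (1/2) * (norm (net_out x W a - y))\<^sup>2"

definition loss_grad :: "('n::finite \<Rightarrow> real^'d) \<Rightarrow> real^'n \<Rightarrow> ('m::finite \<Rightarrow> real^'d) \<Rightarrow> ('m \<Rightarrow> real) \<Rightarrow> 'm \<Rightarrow> real^'d" where
  "loss_grad x y W a r = (1 / sqrt (real CARD('m))) *\<^sub>R
     (\<Sum>i\<in>UNIV. ((net_out x W a $ i - y $ i) * a r * (if W r \<bullet> x i \<ge> 0 then 1 else 0)) *\<^sub>R x i)"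

definition H_inf :: "('n::finite \<Rightarrow> real^'d) \<Rightarrow> real^'n^'n" where
  "H_inf x = (\<chi> i j. (x i \<bullet> x j) * (pi - arccos (x i \<bullet> x j)) / (2 * pi))"

definition H_mat :: "('n::finite \<Rightarrow> real^'d) \<Rightarrow> ('m::finite \<Rightarrow> real^'d) \<Rightarrow> real^'n^'n" where
  "H_mat x W = (\<chi> i j. (1 / real CARD('m)) * (\<Sum>r\<in>UNIV. (x i \<bullet> x j) *
       (if W r \<bullet> x i \<ge> 0 \<and> W r \<bullet> x j \<ge> 0 then 1 else 0)))"

end

theory Submission imports Defs begin

lemma sym_inner:
  fixes A :: "real^'n^'n"
  assumes "transpose A = A"
  shows "v \<bullet> (A *v w) = w \<bullet> (A *v v)"
proof -
  have "v \<bullet> (A *v w) = (v v* A) \<bullet> w" by (simp add: dot_lmul_matrix)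
  also have "\<dots> = (transpose A *v v) \<bullet> w" by (simp add: transpose_matrix_vector)
  also have "\<dots> = w \<bullet> (A *v v)" using assms by (simp add: inner_commute)
  finally show ?thesis .
qed

lemma quad_scale:
  fixes A :: "real^'n^'n"
  shows "(t *\<^sub>R z) \<bullet> (A *v (t *\<^sub>R z)) = t\<^sup>2 * (z \<bullet> (A *v z))"
  by (simp add: matrix_vector_mult_scaleR power2_eq_square)

lemma quad_add:
  fixes A :: "real^'n^'n"
  assumes "transpose A = A"
  shows "(v + w) \<bullet> (A *v (v + w)) = v \<bullet> (A *v v) + 2 * (w \<bullet> (A *v v)) + w \<bullet> (A *v w)"
  using sym_inner[OF assms, of v w]
  by (simp add: matrix_vector_right_distrib inner_add_left inner_add_right)

lemma sym_min_eig:
  fixes A :: "real^'n^'n"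
  assumes sym: "transpose A = A"
  shows "\<exists>c. (\<exists>v. v \<noteq> 0 \<and> A *v v = c *s v) \<and> (\<forall>z. c * (norm z)\<^sup>2 \<le> z \<bullet> (A *v z))"
proof -
  let ?q = "\<lambda>z. z \<bullet> (A *v z)"
  have cont: "continuous_on (sphere 0 1) ?q"
    by (intro continuous_intros linear_continuous_on matrix_vector_mul_linear)
  have ne: "sphere (0::real^'n) 1 \<noteq> {}"
    using norm_axis_1[where 'a='n] by (metis mem_sphere_0 empty_iff)
  obtain v0 where v0: "v0 \<in> sphere 0 1" and mn: "\<And>y. y \<in> sphere 0 1 \<Longrightarrow> ?q v0 \<le> ?q y"
    using continuous_attains_inf[OF compact_sphere ne cont] by blast
  define c where "c = ?q v0"
  have nv0: "norm v0 = 1" using v0 by simp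
  have all: "c * (norm z)\<^sup>2 \<le> ?q z" for z
  proof (cases "z = 0")
    case True then show ?thesis by simp
  next
    case False
    let ?u = "(1 / norm z) *\<^sub>R z"
    have "?u \<in> sphere 0 1" using False by simp
    then have "c \<le> ?q ?u" using mn c_def by blast
    also have "?q ?u = (1/norm z)\<^sup>2 * ?q z" by (rule quad_scale)
    finally have "c \<le> (1/norm z)\<^sup>2 * ?q z" .
    then have "c * (norm z)\<^sup>2 \<le> (1/norm z)\<^sup>2 * ?q z * (norm z)\<^sup>2"
      by (simp add: mult_right_mono)
    also have "\<dots> = ?q z"
    proof -
      have "(1/norm z)\<^sup>2 * (norm z)\<^sup>2 = 1" using False by (simp add: power_divide)
      then show ?thesis using False by (simp add: power_divide)
    qed
    finally show ?thesis .
  qed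
  define r where "r = A *v v0 - c *s v0"
  define K where "K = ?q r - c * (norm r)\<^sup>2"
  have gen: "r' \<bullet> (A *v v0 - c *s v0) = r' \<bullet> (A *v v0) - c * (r' \<bullet> v0)" for r'
    by (simp add: inner_diff_right scalar_mult_eq_scaleR)
  have rv: "r \<bullet> (A *v v0) - c * (r \<bullet> v0) = (norm r)\<^sup>2"
    using gen[of r] unfolding power2_norm_eq_inner by (simp add: r_def[symmetric])
  have key: "0 \<le> 2 * t * (norm r)\<^sup>2 + t\<^sup>2 * K" for t
  proof -
    have "c * (norm (v0 + t *\<^sub>R r))\<^sup>2 \<le> ?q (v0 + t *\<^sub>R r)" by (rule all)
    moreover have "?q (v0 + t *\<^sub>R r) = c + 2 * t * (r \<bullet> (A *v v0)) + t\<^sup>2 * ?q r"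
      using quad_add[OF sym, of v0 "t *\<^sub>R r"] quad_scale[of t r A] c_def
      by (simp add: matrix_vector_mult_scaleR)
    moreover have "(norm (v0 + t *\<^sub>R r))\<^sup>2 = 1 + 2 * t * (r \<bullet> v0) + t\<^sup>2 * (norm r)\<^sup>2"
    proof -
      have "(norm (v0 + t *\<^sub>R r))\<^sup>2 = (v0 + t *\<^sub>R r) \<bullet> (v0 + t *\<^sub>R r)"
        by (rule power2_norm_eq_inner)
      also have "\<dots> = v0 \<bullet> v0 + 2 * t * (r \<bullet> v0) + t\<^sup>2 * (r \<bullet> r)"
        by (simp add: inner_add_left inner_add_right inner_commute power2_eq_square algebra_simps)
      also have "v0 \<bullet> v0 = 1" using nv0 by (simp add: power2_norm_eq_inner[symmetric])
      also have "r \<bullet> r = (norm r)\<^sup>2" by (simp add: power2_norm_eq_inner)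
      finally show ?thesis .
    qed
    ultimately have "0 \<le> 2 * t * (r \<bullet> (A *v v0) - c * (r \<bullet> v0)) + t\<^sup>2 * K"
      unfolding K_def by (simp add: algebra_simps)
    then show ?thesis using rv by simp
  qed
  have "norm r = 0"
  proof (rule ccontr)
    assume nz: "norm r \<noteq> 0"
    then have p: "(norm r)\<^sup>2 > 0" by simp
    show False
    proof (cases "K \<le> 0")
      case True
      then show False using key[of "-1"] p by simp
    next
      case False
      define s where "s = (norm r)\<^sup>2 / K"
      have sp: "s > 0" using p False s_def by simp
      have "0 \<le> 2 * (-s) * (norm r)\<^sup>2 + (-s)\<^sup>2 * K" by (rule key)
      also have "(-s)\<^sup>2 * K = s * (norm r)\<^sup>2" using False s_def by (simp add: power2_eq_square)
      finally have "0 \<le> - s * (norm r)\<^sup>2" by simp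
      then show False using mult_pos_pos[OF sp p] by linarith
    qed
  qed
  then have "A *v v0 = c *s v0" unfolding r_def by simp
  moreover have "v0 \<noteq> 0" using nv0 by auto
  ultimately show ?thesis using all by blast
qed

lemma sym_eig_finite:
  fixes A :: "real^'n^'n"
  assumes sym: "transpose A = A"
  shows "finite {c. \<exists>v. v \<noteq> 0 \<and> A *v v = c *s v}" (is "finite ?S")
proof (rule ccontr)
  assume inf: "infinite ?S"
  obtain B where B: "finite B" "card B = Suc CARD('n)" "B \<subseteq> ?S"
    using infinite_arbitrarily_large[OF inf] by blast
  define f where "f c = (SOME v. v \<noteq> 0 \<and> A *v v = c *s v)" for c
  have f: "f c \<noteq> 0 \<and> A *v f c = c *s f c" if "c \<in> ?S" for c
    using that unfolding f_def by (rule CollectE) (rule someI_ex)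
  have orth: "f c \<bullet> f d = 0" if "c \<in> ?S" "d \<in> ?S" "c \<noteq> d" for c d
  proof -
    have "c * (f d \<bullet> f c) = f d \<bullet> (A *v f c)" using f[OF that(1)]
      by (simp add: scalar_mult_eq_scaleR)
    also have "\<dots> = f c \<bullet> (A *v f d)" by (rule sym_inner[OF sym])
    also have "\<dots> = d * (f c \<bullet> f d)" using f[OF that(2)]
      by (simp add: scalar_mult_eq_scaleR)
    finally have "(c - d) * (f c \<bullet> f d) = 0" by (simp add: inner_commute algebra_simps)
    then show ?thesis using that(3) by simp
  qed
  have BS: "c \<in> ?S" if "c \<in> B" for c using B(3) that by (rule subsetD)
  have inj: "inj_on f B"
  proof (rule inj_onI)
    fix c d assume cB: "c \<in> B" and dB: "d \<in> B" and fe: "f c = f d"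
    show "c = d"
    proof (rule ccontr)
      assume cd: "c \<noteq> d"
      have "f c \<bullet> f d = 0" by (rule orth[OF BS[OF cB] BS[OF dB] cd])
      then have "f c = 0" using fe by simp
      then show False using f[OF BS[OF cB]] by simp
    qed
  qed
  have "pairwise orthogonal (f ` B)"
    unfolding pairwise_def orthogonal_def
  proof (intro ballI impI)
    fix u v assume "u \<in> f ` B" "v \<in> f ` B" "u \<noteq> v"
    then obtain c d where "c \<in> B" "d \<in> B" "u = f c" "v = f d" "c \<noteq> d" by blast
    then show "u \<bullet> v = 0" using orth BS by simp
  qed
  moreover have "0 \<notin> f ` B"
  proof
    assume "0 \<in> f ` B"
    then obtain c where "c \<in> B" "f c = 0" by (metis imageE)
    then show False using f[OF BS] by metis
  qed
  ultimately have "independent (f ` B)" by (rule pairwise_orthogonal_independent)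
  then have "card (f ` B) \<le> DIM(real^'n)" by (rule independent_card_le)
  moreover have "card (f ` B) = Suc CARD('n)" using card_image[OF inj] B(2) by simp
  ultimately show False by simp
qed


lemma lam_min_le:
  fixes A :: "real^'n^'n"
  assumes sym: "transpose A = A"
  shows "lambda_min A * (norm z)\<^sup>2 \<le> z \<bullet> (A *v z)"
proof -
  obtain c where c: "\<exists>v. v \<noteq> 0 \<and> A *v v = c *s v" and call: "\<forall>z. c * (norm z)\<^sup>2 \<le> z \<bullet> (A *v z)"
    using sym_min_eig[OF sym] by blast
  have "lambda_min A \<le> c" unfolding lambda_min_def
    using Min_le[OF sym_eig_finite[OF sym]] c by blast
  then have "lambda_min A * (norm z)\<^sup>2 \<le> c * (norm z)\<^sup>2" by (simp add: mult_right_mono)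
  also have "\<dots> \<le> z \<bullet> (A *v z)" using call by blast
  finally show ?thesis .
qed

lemma H_sym: "transpose (H_mat x W) = H_mat x W"
  by (simp add: transpose_def H_mat_def vec_eq_iff inner_commute conj_commute)

lemma l1_le_l2:
  fixes e :: "real^'n"
  shows "(\<Sum>i\<in>UNIV. \<bar>e $ i\<bar>) \<le> sqrt (real CARD('n)) * norm e"
proof -
  have "(\<Sum>i\<in>UNIV. 1 * \<bar>e $ i\<bar>)\<^sup>2 \<le> (\<Sum>i\<in>(UNIV::'n set). 1\<^sup>2) * (\<Sum>i\<in>UNIV. \<bar>e $ i\<bar>\<^sup>2)"
    by (rule Cauchy_Schwarz_ineq_sum)
  also have "(\<Sum>i\<in>UNIV. \<bar>e $ i\<bar>\<^sup>2) = (norm e)\<^sup>2"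
  proof -
    have "(norm e)\<^sup>2 = (\<Sum>i\<in>UNIV. e $ i * e $ i)"
      unfolding power2_norm_eq_inner inner_vec_def by simp
    then show ?thesis by (simp add: power2_eq_square)
  qed
  finally have "(\<Sum>i\<in>UNIV. \<bar>e $ i\<bar>)\<^sup>2 \<le> real CARD('n) * (norm e)\<^sup>2" by simp
  then have "sqrt ((\<Sum>i\<in>UNIV. \<bar>e $ i\<bar>)\<^sup>2) \<le> sqrt (real CARD('n) * (norm e)\<^sup>2)"
    by (rule real_sqrt_le_mono)
  then show ?thesis by (simp add: real_sqrt_mult sum_nonneg)
qed

theorem mainTheorem7:
  fixes x :: "'n::finite \<Rightarrow> real^'d"
    and y :: "real^'n"
    and W :: "'m::finite \<Rightarrow> real^'d"
    and a :: "'m \<Rightarrow> real"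
  assumes unit: "\<forall>i. norm (x i) = 1"
    and signs: "\<forall>r. a r \<in> {-1, 1}"
    and lam0_pos: "lambda_min (H_inf x) > 0"
    and H_bound: "lambda_min (H_mat x W) \<ge> lambda_min (H_inf x) / 2"
  shows "sqrt (lambda_min (H_inf x)) / sqrt (2 * real CARD('m)) * norm (y - net_out x W a)
           \<le> (MAX r\<in>UNIV. norm (loss_grad x y W a r))
       \<and> (MAX r\<in>UNIV. norm (loss_grad x y W a r))
           \<le> sqrt (real CARD('n)) / sqrt (real CARD('m)) * norm (y - net_out x W a)"
proof -
  define e where "e = net_out x W a - y"
  define m where "m = real CARD('m)"
  define I where "I r i = (if W r \<bullet> x i \<ge> 0 then 1 else 0 :: real)" for r i
  define G where "G r = (\<Sum>i\<in>UNIV. (e $ i * I r i) *\<^sub>R x i)" for r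
  define lg where "lg r = norm (loss_grad x y W a r)" for r
  define M where "M = (MAX r\<in>UNIV. lg r)"
  define l0 where "l0 = lambda_min (H_inf x)"
  have mpos: "m > 0" unfolding m_def by simp
  have aor: "a r = -1 \<or> a r = 1" for r using signs by auto
  have aabs: "\<bar>a r\<bar> = 1" for r using aor[of r] by auto
  have lgG: "loss_grad x y W a r = (a r / sqrt m) *\<^sub>R G r" for r
    unfolding loss_grad_def G_def e_def I_def m_def
    by (simp add: scaleR_sum_right algebra_simps)
  have lgn: "lg r = norm (G r) / sqrt m" for r
    unfolding lg_def lgG using aabs[of r] mpos by simp
  have lg2: "(lg r)\<^sup>2 = (norm (G r))\<^sup>2 / m" for r
    using mpos by (simp add: lgn power_divide)
  have G2: "(norm (G r))\<^sup>2 = (\<Sum>i\<in>UNIV. \<Sum>j\<in>UNIV. (e $ i * I r i) * (e $ j * I r j) * (x i \<bullet> x j))" for r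
    unfolding G_def power2_norm_eq_inner
    by (simp add: inner_sum_left inner_sum_right sum_distrib_left algebra_simps inner_commute)
  have quad: "e \<bullet> (H_mat x W *v e) = (\<Sum>r\<in>UNIV. (lg r)\<^sup>2)"
  proof -
    have "e \<bullet> (H_mat x W *v e) = (\<Sum>i\<in>UNIV. \<Sum>j\<in>UNIV. \<Sum>r\<in>UNIV.
         (e $ i * I r i) * (e $ j * I r j) * (x i \<bullet> x j) / m)"
    proof -
      have Hij: "H_mat x W $ i $ j = (\<Sum>r\<in>UNIV. I r i * I r j * (x i \<bullet> x j)) / m" for i j
        unfolding H_mat_def I_def m_def by (auto simp add: sum_divide_distrib algebra_simps intro!: sum.cong)
      have "e \<bullet> (H_mat x W *v e) = (\<Sum>i\<in>UNIV. e $ i * (H_mat x W *v e) $ i)"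
        by (simp only: inner_vec_def inner_real_def)
      also have "\<dots> = (\<Sum>i\<in>UNIV. e $ i * (\<Sum>j\<in>UNIV. H_mat x W $ i $ j * e $ j))"
        by (simp only: matrix_vector_mult_def vec_lambda_beta)
      also have "\<dots> = (\<Sum>i\<in>UNIV. \<Sum>j\<in>UNIV. \<Sum>r\<in>UNIV.
         (e $ i * I r i) * (e $ j * I r j) * (x i \<bullet> x j) / m)"
        unfolding Hij by (simp add: sum_distrib_left sum_distrib_right sum_divide_distrib algebra_simps)
      finally show ?thesis .
    qed
    also have "\<dots> = (\<Sum>i\<in>UNIV. \<Sum>r\<in>UNIV. \<Sum>j\<in>UNIV.
         (e $ i * I r i) * (e $ j * I r j) * (x i \<bullet> x j) / m)"
      by (rule sum.cong[OF refl], rule sum.swap)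
    also have "\<dots> = (\<Sum>r\<in>UNIV. \<Sum>i\<in>UNIV. \<Sum>j\<in>UNIV.
         (e $ i * I r i) * (e $ j * I r j) * (x i \<bullet> x j) / m)"
      by (rule sum.swap)
    also have "\<dots> = (\<Sum>r\<in>UNIV. (lg r)\<^sup>2)"
      by (simp add: lg2 G2 sum_divide_distrib)
    finally show ?thesis .
  qed
  have upper: "lg r \<le> sqrt (real CARD('n)) / sqrt m * norm e" for r
  proof -
    have "norm (G r) \<le> (\<Sum>i\<in>UNIV. norm ((e $ i * I r i) *\<^sub>R x i))"
      unfolding G_def by (rule norm_sum)
    also have "\<dots> \<le> (\<Sum>i\<in>UNIV. \<bar>e $ i\<bar>)"
      by (rule sum_mono) (simp add: I_def unit abs_mult)
    also have "\<dots> \<le> sqrt (real CARD('n)) * norm e" by (rule l1_le_l2)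
    finally have "norm (G r) / sqrt m \<le> sqrt (real CARD('n)) * norm e / sqrt m"
      using mpos by (simp add: divide_right_mono)
    then show ?thesis by (simp add: lgn)
  qed
  have Mge: "lg r \<le> M" for r unfolding M_def by (rule Max_ge) auto
  have Mle: "M \<le> sqrt (real CARD('n)) / sqrt m * norm e"
    unfolding M_def using upper by (intro Max.boundedI) auto
  have M0: "0 \<le> M" using Mge[of undefined] lg_def by (smt (verit) norm_ge_zero)
  have "(\<Sum>r\<in>UNIV. (lg r)\<^sup>2) \<le> of_nat (card (UNIV::'m set)) * M\<^sup>2"
    by (rule sum_bounded_above) (simp add: lg_def power_mono Mge[unfolded lg_def])
  then have sumM: "(\<Sum>r\<in>UNIV. (lg r)\<^sup>2) \<le> m * M\<^sup>2" by (simp add: m_def)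
  have "l0 / 2 * (norm e)\<^sup>2 \<le> lambda_min (H_mat x W) * (norm e)\<^sup>2"
    using mult_right_mono[OF H_bound, of "(norm e)\<^sup>2"] unfolding l0_def by simp
  also have "\<dots> \<le> e \<bullet> (H_mat x W *v e)" by (rule lam_min_le[OF H_sym])
  also have "\<dots> \<le> m * M\<^sup>2" using quad sumM by simp
  finally have c0: "l0 / 2 * (norm e)\<^sup>2 \<le> m * M\<^sup>2" .
  have "l0 / 2 * (norm e)\<^sup>2 = (l0 * (norm e)\<^sup>2) / 2" by simp
  then have c1: "l0 * (norm e)\<^sup>2 \<le> M\<^sup>2 * (2 * m)" using c0 by (simp add: mult.commute)
  have key: "l0 * (norm e)\<^sup>2 / (2 * m) \<le> M\<^sup>2"
    using c1 mpos by (simp add: pos_divide_le_eq)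
  have "sqrt l0 / sqrt (2 * m) * norm e = sqrt (l0 * (norm e)\<^sup>2 / (2 * m))"
    by (simp add: real_sqrt_mult real_sqrt_divide)
  also have "\<dots> \<le> sqrt (M\<^sup>2)" using key by (rule real_sqrt_le_mono)
  also have "\<dots> = M" using M0 by simp
  finally have lower: "sqrt l0 / sqrt (2 * m) * norm e \<le> M" .
  have ne: "norm (y - net_out x W a) = norm e" unfolding e_def by (rule norm_minus_commute)
  show ?thesis using lower Mle unfolding ne M_def lg_def l0_def m_def by simp
qed

end
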